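(* Let $k$ be an arbitrary field of characteristic $0$. Let $x$, $y$ and $z$ be roots of unity in $k$, let $a$, $b$ and $c$ be integer numbers and consider the matrix $$M(a,b,c;x,y,z) = \begin{pmatrix} x^a & x^b & x^c \\ y^a & y^b & y^c \\ z^a & z^b & z^c \end{pmatrix}.$$ If this matrix is degenerate, then it has either two proportional rows or two proportional columns. *)

theory Defs
  imports "HOL-Analysis.Analysis"
begin

definition root_of_unity :: "'a::field \<Rightarrow> bool" where
  "root_of_unity x \<longleftrightarrow> (\<exists>n::nat. n > 0 \<and> x ^ n = 1)"

definition proportional :: "'a::field ^ 'n \<Rightarrow> 'a ^ 'n \<Rightarrow> bool" where
  "proportional u v \<longleftrightarrow> (\<exists>s t. (s \<noteq> 0 \<or> t \<noteq> 0) \<and> s *s u + t *s v = 0)"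

definition M3 :: "int \<Rightarrow> int \<Rightarrow> int \<Rightarrow> 'a::field \<Rightarrow> 'a \<Rightarrow> 'a \<Rightarrow> 'a ^ 3 ^ 3" where
  "M3 a b c x y z = (\<chi> i j. (if i = 1 then x else if i = 2 then y else z) powi
                              (if j = 1 then a else if j = 2 then b else c))"

end

theory Submission imports Defs "HOL-Computational_Algebra.Computational_Algebra" "HOL-Computational_Algebra.Field_as_Ring" begin


definition ordr :: "'a::idom \<Rightarrow> nat" where
  "ordr w = (LEAST k. 0 < k \<and> w ^ k = 1)"

lemma ordr_basic:
  fixes w :: "'a::idom"
  assumes "w ^ n = 1" "n > 0"
  shows "0 < ordr w \<and> w ^ ordr w = 1"
  unfolding ordr_def by (rule LeastI[where P="\<lambda>k. 0 < k \<and> w ^ k = 1"]) (use assms in simp)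

lemma ordr_le:
  fixes w :: "'a::idom"
  assumes "0 < k" "w ^ k = 1"
  shows "ordr w \<le> k"
  unfolding ordr_def by (rule Least_le) (use assms in simp)

lemma ordr_dvd:
  fixes w :: "'a::idom"
  assumes "w ^ n = 1" "n > 0"
  shows "w ^ k = 1 \<longleftrightarrow> ordr w dvd k"
proof
  have o: "0 < ordr w" "w ^ ordr w = 1" using ordr_basic[OF assms] by auto
  assume k: "w ^ k = 1"
  have "w ^ k = (w ^ ordr w) ^ (k div ordr w) * w ^ (k mod ordr w)"
    by (simp only: power_mult[symmetric] power_add[symmetric] mult_div_mod_eq)
  hence m: "w ^ (k mod ordr w) = 1" using k o by simp
  show "ordr w dvd k"
  proof (rule ccontr)
    assume "\<not> ordr w dvd k"
    hence "0 < k mod ordr w" by (simp add: dvd_eq_mod_eq_0)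
    hence "ordr w \<le> k mod ordr w" using m by (rule ordr_le)
    moreover have "k mod ordr w < ordr w" using o by simp
    ultimately show False by simp
  qed
next
  have o: "0 < ordr w" "w ^ ordr w = 1" using ordr_basic[OF assms] by auto
  assume "ordr w dvd k"
  then obtain t where "k = ordr w * t" by blast
  thus "w ^ k = 1" using o by (simp add: power_mult)
qed

lemma ordr_mult_coprime:
  fixes a b :: "'a::idom"
  assumes "a ^ n = 1" "n > 0" "b ^ m = 1" "m > 0" "coprime (ordr a) (ordr b)"
  shows "ordr (a * b) = ordr a * ordr b"
proof -
  let ?p = "ordr a" and ?q = "ordr b"
  have "(a*b) ^ (n*m) = (a^n)^m * (b^m)^n"
    by (simp only: power_mult_distrib power_mult[symmetric] mult.commute[of m n])
  hence ab: "(a*b) ^ (n*m) = 1" using assms by simp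
  have nm: "n * m > 0" using assms by simp
  have pa: "a ^ ?p = 1" "b ^ ?q = 1" using ordr_basic assms by blast+
  have "(a*b) ^ (?p * ?q) = (a ^ ?p) ^ ?q * (b ^ ?q) ^ ?p"
    by (simp only: power_mult_distrib power_mult[symmetric] mult.commute[of "ordr b" "ordr a"])
  hence "(a*b) ^ (?p * ?q) = 1" using pa by simp
  hence d1: "ordr (a*b) dvd ?p * ?q" using ordr_dvd[OF ab nm, of "?p * ?q"] by simp
  let ?o = "ordr (a*b)"
  have o1: "(a*b) ^ ?o = 1" using ordr_basic[OF ab nm] by blast
  have "a ^ (?o * ?q) = 1"
  proof -
    have "a ^ (?o * ?q) = a ^ (?o * ?q) * (b ^ ?q) ^ ?o" using pa by simp
    also have "... = ((a*b) ^ ?o) ^ ?q"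
      by (simp only: power_mult_distrib power_mult[symmetric] mult.commute[of "ordr b" "ordr (a*b)"])
    finally show ?thesis using o1 by simp
  qed
  hence "?p dvd ?o * ?q" using ordr_dvd[OF assms(1,2), of "?o * ?q"] by simp
  hence p: "?p dvd ?o" using assms(5) by (simp add: coprime_dvd_mult_left_iff)
  have "b ^ (?o * ?p) = 1"
  proof -
    have "b ^ (?o * ?p) = (a ^ ?p) ^ ?o * b ^ (?o * ?p)" using pa by simp
    also have "... = ((a*b) ^ ?o) ^ ?p"
      by (simp only: power_mult_distrib power_mult[symmetric] mult.commute[of "ordr a" "ordr (a*b)"])
    finally show ?thesis using o1 by simp
  qed
  hence "?q dvd ?o * ?p" using ordr_dvd[OF assms(3,4), of "?o * ?p"] by simp
  moreover have cq: "coprime ?q ?p" using assms(5) coprime_commute by blast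
  ultimately have q: "?q dvd ?o" by (simp add: coprime_dvd_mult_left_iff)
  have "?p * ?q dvd ?o" using p q assms(5) by (simp add: divides_mult)
  thus ?thesis using d1 by (simp add: dvd_antisym)
qed

lemma ordr_pow:
  fixes a :: "'a::idom"
  assumes "a ^ n = 1" "n > 0" "ordr a = d * e" "d > 0"
  shows "ordr (a ^ d) = e"
proof -
  have "(a ^ d) ^ n = (a ^ n) ^ d" by (simp only: power_mult[symmetric] mult.commute)
  hence ad: "(a ^ d) ^ n = 1" using assms by simp
  have "(a ^ d) ^ k = 1 \<longleftrightarrow> e dvd k" for k
    using ordr_dvd[OF assms(1,2), of "d*k"] assms(3,4) by (simp add: power_mult)
  moreover have "(a ^ d) ^ k = 1 \<longleftrightarrow> ordr (a^d) dvd k" for k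
    using ordr_dvd[OF ad assms(2), of k] by simp
  ultimately show ?thesis by (meson dvd_antisym dvd_refl)
qed

lemma monom_minus_one_ne:
  assumes "n > 0"
  shows "monom (1::'a::comm_ring_1) n - 1 \<noteq> 0"
proof
  assume h: "monom (1::'a) n - 1 = 0"
  have "coeff (monom (1::'a) n - 1) n = 1" using assms by (simp add: coeff_monom)
  thus False using h by simp
qed

lemma cyclic_roots:
  fixes L :: nat
  assumes "L > 0"
  shows "\<exists>(\<theta>::'a::field) m. m > 0 \<and> \<theta> ^ m = 1 \<and> (\<forall>w. w ^ L = 1 \<longrightarrow> (\<exists>i. w = \<theta> ^ i))"
proof -
  define G where "G = {w::'a. w ^ L = 1}"
  have pe: "poly (monom 1 L - 1) w = w ^ L - 1" for w :: 'a by (simp add: poly_monom)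
  have ne: "(monom (1::'a) L - 1) \<noteq> 0" using monom_minus_one_ne[OF assms] .
  have "G = {w. poly (monom 1 L - 1) w = 0}" unfolding G_def pe by simp
  hence finG: "finite G" using poly_roots_finite[OF ne] by simp
  have "1 \<in> G" unfolding G_def by simp
  define m where "m = Max (ordr ` G)"
  have "m \<in> ordr ` G" unfolding m_def using finG \<open>1 \<in> G\<close> by (intro Max_in) auto
  then obtain \<theta> where th: "\<theta> \<in> G" "ordr \<theta> = m" by blast
  have mx: "ordr w \<le> m" if "w \<in> G" for w unfolding m_def using finG that by simp
  have thL: "\<theta> ^ L = 1" using th G_def by simp
  have m0: "m > 0" "\<theta> ^ m = 1" using ordr_basic[OF thL assms] th by auto
  have dv: "ordr w dvd m" if w: "w \<in> G" for w
  proof (rule ccontr)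
    assume nd: "\<not> ordr w dvd m"
    have wL: "w ^ L = 1" using w G_def by simp
    have ow: "ordr w > 0" using ordr_basic[OF wL assms] by simp
    have "\<exists>p. prime p \<and> multiplicity p (ordr w) > multiplicity p m"
    proof (rule ccontr)
      assume "\<not> ?thesis"
      hence "\<And>p. prime p \<Longrightarrow> multiplicity p (ordr w) \<le> multiplicity p m" by (auto simp: not_less)
      hence "ordr w dvd m" using multiplicity_le_imp_dvd[of "ordr w" m] ow by simp
      thus False using nd by simp
    qed
    then obtain p where p: "prime p" "multiplicity p (ordr w) > multiplicity p m" by blast
    define k where "k = multiplicity p m"
    define j where "j = multiplicity p (ordr w)"
    have nu: "\<not> is_unit p" using p(1) by (auto dest: prime_gt_1_nat)
    obtain r where r: "m = p ^ k * r" "\<not> p dvd r" unfolding k_def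
      using multiplicity_decompose'[of m p] m0(1) nu by auto
    obtain s where s: "ordr w = p ^ j * s" "\<not> p dvd s" unfolding j_def
      using multiplicity_decompose'[of "ordr w" p] ow nu by auto
    have pk: "p ^ k > 0" "p ^ j > 0" "s > 0" using p(1) s ow prime_gt_0_nat by auto
    have o1: "ordr (\<theta> ^ (p ^ k)) = r" using ordr_pow[OF thL assms, of "p^k" r] th r pk by simp
    have o2: "ordr (w ^ s) = p ^ j" using ordr_pow[OF wL assms, of s "p^j"] s pk by (simp add: mult.commute)
    have cop: "coprime r (p ^ j)"
      using r(2) p(1) by (simp add: coprime_commute prime_imp_coprime coprime_power_right_iff)
    have "(\<theta> ^ (p ^ k)) ^ L = (\<theta> ^ L) ^ (p ^ k)" by (simp only: power_mult[symmetric] mult.commute)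
    hence e1: "(\<theta> ^ (p ^ k)) ^ L = 1" using thL by simp
    have "(w ^ s) ^ L = (w ^ L) ^ s" by (simp only: power_mult[symmetric] mult.commute)
    hence e2: "(w ^ s) ^ L = 1" using wL by simp
    have "ordr (\<theta> ^ (p ^ k) * w ^ s) = r * p ^ j"
      using ordr_mult_coprime[OF e1 assms e2 assms] o1 o2 cop by simp
    moreover have "\<theta> ^ (p ^ k) * w ^ s \<in> G" using e1 e2 unfolding G_def by (simp add: power_mult_distrib)
    ultimately have "r * p ^ j \<le> m" using mx by fastforce
    moreover have "r > 0" using r(1) m0(1) by (cases r) auto
    moreover have "p ^ k < p ^ j" using p(2) unfolding k_def[symmetric] j_def[symmetric]
      by (intro power_strict_increasing prime_gt_1_nat[OF p(1)])
    ultimately have "r * p ^ k < r * p ^ j" "r * p ^ j \<le> m" by simp_all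
    hence "r * p ^ k < m" by linarith
    moreover have "m = r * p ^ k" using r(1) by (simp add: mult.commute)
    ultimately show False by simp
  qed
  have pm: "poly (monom 1 m - 1) w = w ^ m - 1" for w :: 'a by (simp add: poly_monom)
  have nem: "(monom (1::'a) m - 1) \<noteq> 0" using monom_minus_one_ne[OF m0(1)] .
  define R where "R = {w::'a. w ^ m = 1}"
  have Req: "R = {w. poly (monom 1 m - 1) w = 0}" unfolding R_def pm by simp
  have dm: "degree (monom (1::'a) m - 1) \<le> m"
    by (rule degree_diff_le) (simp_all add: degree_monom_le)
  have finR: "finite R" using poly_roots_finite[OF nem] Req by simp
  have cR: "card R \<le> m" using card_poly_roots_bound[OF nem] dm Req by simp
  have inj: "inj_on (\<lambda>i. \<theta> ^ i) {..<m}"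
  proof (rule inj_onI)
    fix i j assume ij: "i \<in> {..<m}" "j \<in> {..<m}" "\<theta> ^ i = \<theta> ^ j"
    have "\<theta> \<noteq> 0" using m0 by (intro notI) (simp add: zero_power)
    show "i = j"
    proof (rule ccontr)
      assume "i \<noteq> j"
      then consider "i < j" | "j < i" by linarith
      thus False
      proof cases
        case 1
        have "\<theta> ^ j = \<theta> ^ i * \<theta> ^ (j - i)" using 1 by (simp add: power_add[symmetric])
        hence "\<theta> ^ (j - i) = 1" using ij \<open>\<theta> \<noteq> 0\<close> by simp
        hence "m dvd j - i" using ordr_dvd[OF thL assms, of "j - i"] th(2) by simp
        thus False using 1 ij by (simp add: nat_dvd_not_less)
      next
        case 2
        have "\<theta> ^ i = \<theta> ^ j * \<theta> ^ (i - j)" using 2 by (simp add: power_add[symmetric])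
        hence "\<theta> ^ (i - j) = 1" using ij \<open>\<theta> \<noteq> 0\<close> by simp
        hence "m dvd i - j" using ordr_dvd[OF thL assms, of "i - j"] th(2) by simp
        thus False using 2 ij by (simp add: nat_dvd_not_less)
      qed
    qed
  qed
  have sub: "(\<lambda>i. \<theta> ^ i) ` {..<m} \<subseteq> R"
  proof
    fix u assume "u \<in> (\<lambda>i. \<theta> ^ i) ` {..<m}"
    then obtain i where "u = \<theta> ^ i" by blast
    hence "u ^ m = (\<theta> ^ m) ^ i" by (simp only: power_mult[symmetric] mult.commute)
    thus "u \<in> R" using m0 unfolding R_def by simp
  qed
  have "card ((\<lambda>i. \<theta> ^ i) ` {..<m}) = m" using inj by (simp add: card_image)
  hence eq: "(\<lambda>i. \<theta> ^ i) ` {..<m} = R" using card_seteq[OF finR sub] cR by simp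
  have "\<forall>w. w ^ L = 1 \<longrightarrow> (\<exists>i. w = \<theta> ^ i)"
  proof (intro allI impI)
    fix w :: 'a assume "w ^ L = 1"
    hence wG: "w \<in> G" unfolding G_def by simp
    have wL: "w ^ L = 1" using wG G_def by simp
    have "ordr w dvd m" using dv[OF wG] .
    hence "w ^ m = 1" using ordr_dvd[OF wL assms, of m] by simp
    hence "w \<in> R" unfolding R_def by simp
    hence "w \<in> (\<lambda>i. \<theta> ^ i) ` {..<m}" using eq by simp
    thus "\<exists>i. w = \<theta> ^ i" by auto
  qed
  thus ?thesis using m0 by (intro exI[of _ \<theta>] exI[of _ m]) simp
qed



definition evr :: "'a::field_char_0 \<Rightarrow> rat poly \<Rightarrow> 'a" where
  "evr w p = poly (map_poly of_rat p) w"

lemma mp_add: "map_poly (of_rat::rat\<Rightarrow>'a::field_char_0) (p + q) = map_poly of_rat p + map_poly of_rat q"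
  by (rule poly_eqI) (simp add: coeff_map_poly of_rat_add)

lemma mp_diff: "map_poly (of_rat::rat\<Rightarrow>'a::field_char_0) (p - q) = map_poly of_rat p - map_poly of_rat q"
  by (rule poly_eqI) (simp add: coeff_map_poly of_rat_diff)

lemma mp_mult: "map_poly (of_rat::rat\<Rightarrow>'a::field_char_0) (p * q) = map_poly of_rat p * map_poly of_rat q"
  by (rule poly_eqI) (simp add: coeff_map_poly coeff_mult of_rat_sum of_rat_mult)

lemma evr_add[simp]: "evr w (p + q) = evr w p + evr w q"
  by (simp add: evr_def mp_add)
lemma evr_diff[simp]: "evr w (p - q) = evr w p - evr w q"
  by (simp add: evr_def mp_diff)
lemma evr_mult[simp]: "evr w (p * q) = evr w p * evr w q"
  by (simp add: evr_def mp_mult)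
lemma evr_one[simp]: "evr w 1 = 1"
  by (simp add: evr_def)
lemma evr_monom[simp]: "evr w (monom 1 k) = w ^ k"
  by (simp add: evr_def map_poly_monom poly_monom)
lemma evr_const: "evr w [:c:] = of_rat c"
  by (cases "c = 0") (simp_all add: evr_def map_poly_pCons)

lemma evr_dvd: "f dvd g \<Longrightarrow> evr w f = 0 \<Longrightarrow> evr w g = 0"
  by (metis dvd_def evr_mult mult_zero_left)

lemma minpoly_transfer:
  fixes \<theta> :: "'a::field_char_0"
  assumes "\<theta> ^ N = 1" "N > 0"
  shows "\<exists>\<xi>::complex. \<forall>g. evr \<theta> g = 0 \<longleftrightarrow> evr \<xi> g = 0"
proof -
  define P where "P = (\<lambda>g::rat poly. g \<noteq> 0 \<and> evr \<theta> g = 0)"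
  have P0: "P (monom 1 N - 1)" unfolding P_def using assms
    by (metis diff_eq_eq monom_eq_1_iff add_0 less_numeral_extra(3) evr_diff evr_monom evr_one right_minus_eq)
  define f where "f = arg_min degree P"
  have fP: "P f" and fmin: "\<And>g. P g \<Longrightarrow> degree f \<le> degree g"
    using arg_min_nat_lemma[of P, OF P0] unfolding f_def by auto
  have f0: "f \<noteq> 0" "evr \<theta> f = 0" using fP P_def by auto
  have fdvd: "f dvd g" if "evr \<theta> g = 0" for g
  proof (rule ccontr)
    assume nd: "\<not> f dvd g"
    have "g = g div f * f + g mod f" by simp
    hence "evr \<theta> (g mod f) = 0" using that f0
      by (metis add_0 evr_add evr_mult mult_zero_right)
    moreover have "g mod f \<noteq> 0" using nd by (simp add: dvd_eq_mod_eq_0)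
    ultimately have "degree f \<le> degree (g mod f)" using fmin P_def by blast
    moreover have "degree (g mod f) < degree f" using degree_mod_less_degree[OF f0(1) nd] .
    ultimately show False by simp
  qed
  have degf: "degree f > 0"
  proof (rule ccontr)
    assume "\<not> degree f > 0"
    then obtain c where "f = [:c:]" by (metis degree_eq_zeroE not_gr0)
    thus False using f0 evr_const[of \<theta> c] by simp
  qed
  define fc where "fc = map_poly (of_rat :: rat \<Rightarrow> complex) f"
  have "degree fc = degree f" unfolding fc_def by (simp add: degree_map_poly)
  hence "\<not> (\<exists>a l. a \<noteq> 0 \<and> l = 0 \<and> fc = pCons a l)" using degf by auto
  then obtain \<xi> where xi: "poly fc \<xi> = 0" using fundamental_theorem_of_algebra_alt by blast
  hence fxi: "evr \<xi> f = 0" unfolding evr_def fc_def by simp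
  have "evr \<theta> g = 0 \<longleftrightarrow> evr \<xi> g = 0" for g
  proof
    assume "evr \<theta> g = 0"
    thus "evr \<xi> g = 0" using fdvd evr_dvd fxi by blast
  next
    assume gx: "evr \<xi> g = 0"
    obtain u v where uv: "bezout_coefficients f g = (u, v)" by (cases "bezout_coefficients f g")
    define d where "d = gcd f g"
    have "u * f + v * g = d" using bezout_coefficients[OF uv] d_def by simp
    hence dx: "evr \<xi> d = 0" using gx fxi by (metis add_0 evr_add evr_mult mult_zero_right)
    obtain e where e: "f = d * e" unfolding d_def by (metis gcd_dvd1 dvd_def)
    have "evr \<theta> d * evr \<theta> e = 0" using e f0 by (metis evr_mult)
    hence "evr \<theta> d = 0 \<or> evr \<theta> e = 0" by simp
    thus "evr \<theta> g = 0"
    proof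
      assume "evr \<theta> d = 0"
      hence "f dvd d" using fdvd by blast
      hence "f dvd g" unfolding d_def using gcd_dvd2 dvd_trans by blast
      thus ?thesis using evr_dvd f0 by blast
    next
      assume "evr \<theta> e = 0"
      hence "f dvd e" using fdvd by blast
      moreover have "e \<noteq> 0" "d \<noteq> 0" using e f0 by auto
      ultimately have "degree f \<le> degree e" by (simp add: dvd_imp_degree_le)
      moreover have "degree f = degree d + degree e" using e \<open>e \<noteq> 0\<close> \<open>d \<noteq> 0\<close> by (simp add: degree_mult_eq)
      ultimately have "degree d = 0" by simp
      then obtain c where "d = [:c:]" by (metis degree_eq_zeroE)
      hence "c \<noteq> 0" using \<open>d \<noteq> 0\<close> by simp
      moreover have "evr \<xi> d = of_rat c" using \<open>d = [:c:]\<close> evr_const by simp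
      ultimately have "evr \<xi> d \<noteq> 0" by simp
      thus ?thesis using dx by simp
    qed
  qed
  thus ?thesis by blast
qed



lemma fld_lemma:
  fixes a b c d :: "'a::field"
  assumes nz: "a \<noteq> 0" "b \<noteq> 0" "c \<noteq> 0" "d \<noteq> 0"
    and r: "(a - 1) * (d - 1) = (b - 1) * (c - 1)" and K: "(a - 1) * (d - 1) \<noteq> 0"
    and ri: "(inverse a - 1) * (inverse d - 1) = (inverse b - 1) * (inverse c - 1)"
  shows "a * d = b * c"
proof -
  have e1: "(inverse a - 1) * (inverse d - 1) = ((a - 1) * (d - 1)) / (a * d)"
    using nz by (simp add: field_simps)
  have e2: "(inverse b - 1) * (inverse c - 1) = ((b - 1) * (c - 1)) / (b * c)"
    using nz by (simp add: field_simps)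
  have "((a - 1) * (d - 1)) / (a * d) = ((a - 1) * (d - 1)) / (b * c)"
    using ri e1 e2 r by simp
  thus ?thesis using K nz by (simp add: field_simps)
qed

lemma cx_lemma:
  fixes u :: complex
  assumes "u ^ N = 1" "N > 0" "(u^A - 1) * (u^D - 1) = (u^B - 1) * (u^C - 1)"
    "u ^ A \<noteq> 1" "u ^ D \<noteq> 1"
  shows "u ^ (A + D) = u ^ (B + C)"
proof -
  have n1: "norm u = 1" using power_eq_1_iff[OF assms(1)] assms(2) by simp
  have u0: "u \<noteq> 0" using n1 by auto
  have "u * cnj u = 1" using complex_norm_square[of u] n1 by simp
  hence cu: "cnj u = inverse u" using u0 by (simp add: field_simps)
  have ck: "cnj (u ^ k) = inverse (u ^ k)" for k by (simp add: cu power_inverse)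
  have "cnj ((u^A - 1) * (u^D - 1)) = cnj ((u^B - 1) * (u^C - 1))" using assms(3) by simp
  hence ri: "(inverse (u^A) - 1) * (inverse (u^D) - 1) = (inverse (u^B) - 1) * (inverse (u^C) - 1)"
    by (simp add: cu power_inverse)
  have K: "(u^A - 1) * (u^D - 1) \<noteq> 0" using assms(4,5) by simp
  have "u^A * u^D = u^B * u^C"
    by (rule fld_lemma[OF _ _ _ _ assms(3) K ri]) (simp_all add: u0)
  thus ?thesis by (simp add: power_add)
qed



lemma prop_rows:
  fixes M :: "'a::field^3^3"
  assumes "s \<noteq> 0" "\<And>k. s * M$i$k + t * M$j$k = 0"
  shows "proportional (row i M) (row j M)"
  unfolding proportional_def
  by (rule exI[of _ s], rule exI[of _ t]) (simp add: vec_eq_iff row_def assms)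

lemma prop_cols:
  fixes M :: "'a::field^3^3"
  assumes "s \<noteq> 0" "\<And>k. s * M$k$i + t * M$k$j = 0"
  shows "proportional (column i M) (column j M)"
  unfolding proportional_def
  by (rule exI[of _ s], rule exI[of _ t]) (simp add: vec_eq_iff column_def assms)

lemma three_neq: "(1::3) \<noteq> 2" "(1::3) \<noteq> 3" "(2::3) \<noteq> 3" "(2::3) \<noteq> 1" "(3::3) \<noteq> 1" "(3::3) \<noteq> 2"
  by simp_all

lemma diff_iff:
  fixes a b c d k :: "'a::field"
  assumes "a - b = (c - d) * k" "k \<noteq> 0"
  shows "a = b \<longleftrightarrow> c = d"
proof -
  have "a = b \<longleftrightarrow> a - b = 0" by simp
  also have "\<dots> \<longleftrightarrow> c - d = 0" using assms by simp
  finally show ?thesis by simp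
qed

lemma concl_lemma:
  fixes M :: "'a::field^3^3"
  assumes e: "M$1$1 = p1" "M$1$2 = p2" "M$1$3 = p3" "M$2$1 = q1" "M$2$2 = q2" "M$2$3 = q3"
     "M$3$1 = r1" "M$3$2 = r2" "M$3$3 = r3"
  and nz: "p1 \<noteq> 0" "p2 \<noteq> 0" "p3 \<noteq> 0" "q1 \<noteq> 0" "q2 \<noteq> 0" "q3 \<noteq> 0" "r1 \<noteq> 0" "r2 \<noteq> 0" "r3 \<noteq> 0"
  and Y: "Y1 = q2 * p1 * inverse q1 * inverse p2" "Y2 = q3 * p1 * inverse q1 * inverse p3"
         "Z1 = r2 * p1 * inverse r1 * inverse p2" "Z2 = r3 * p1 * inverse r1 * inverse p3"
  and cs: "(Y1 = 1 \<and> Y2 = 1) \<or> (Z1 = 1 \<and> Z2 = 1) \<or> (Y1 = Z1 \<and> Y2 = Z2) \<or>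
           (Y1 = 1 \<and> Z1 = 1) \<or> (Y2 = 1 \<and> Z2 = 1) \<or> (Y1 = Y2 \<and> Z1 = Z2)"
  shows "(\<exists>i j. i \<noteq> j \<and> proportional (row i M) (row j M))
       \<or> (\<exists>i j. i \<noteq> j \<and> proportional (column i M) (column j M))"
proof -
  have Y1e: "Y1 = 1 \<longleftrightarrow> q2 * p1 = q1 * p2"
    by (rule diff_iff[of _ _ _ _ "inverse (q1 * p2)"]) (use nz in \<open>simp_all add: Y field_simps\<close>)
  have Y2e: "Y2 = 1 \<longleftrightarrow> q3 * p1 = q1 * p3"
    by (rule diff_iff[of _ _ _ _ "inverse (q1 * p3)"]) (use nz in \<open>simp_all add: Y field_simps\<close>)
  have Z1e: "Z1 = 1 \<longleftrightarrow> r2 * p1 = r1 * p2"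
    by (rule diff_iff[of _ _ _ _ "inverse (r1 * p2)"]) (use nz in \<open>simp_all add: Y field_simps\<close>)
  have Z2e: "Z2 = 1 \<longleftrightarrow> r3 * p1 = r1 * p3"
    by (rule diff_iff[of _ _ _ _ "inverse (r1 * p3)"]) (use nz in \<open>simp_all add: Y field_simps\<close>)
  have YZ1: "Y1 = Z1 \<longleftrightarrow> q2 * r1 = r2 * q1"
    by (rule diff_iff[of _ _ _ _ "p1 * inverse (q1 * r1 * p2)"]) (use nz in \<open>simp_all add: Y field_simps\<close>)
  have YZ2: "Y2 = Z2 \<longleftrightarrow> q3 * r1 = r3 * q1"
    by (rule diff_iff[of _ _ _ _ "p1 * inverse (q1 * r1 * p3)"]) (use nz in \<open>simp_all add: Y field_simps\<close>)
  have YY: "Y1 = Y2 \<longleftrightarrow> q2 * p3 = q3 * p2"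
    by (rule diff_iff[of _ _ _ _ "p1 * inverse (q1 * p2 * p3)"]) (use nz in \<open>simp_all add: Y field_simps\<close>)
  have ZZ: "Z1 = Z2 \<longleftrightarrow> r2 * p3 = r3 * p2"
    by (rule diff_iff[of _ _ _ _ "p1 * inverse (r1 * p2 * p3)"]) (use nz in \<open>simp_all add: Y field_simps\<close>)
  have A: "\<And>k::3. P k" if "P 1" "P 2" "P 3" for P using that exhaust_3 by metis
  from cs show ?thesis
  proof (elim disjE conjE)
    assume h: "Y1 = 1" "Y2 = 1"
    have "proportional (row 2 M) (row 1 M)"
      by (rule prop_rows[where s = p1 and t = "- q1"], use nz in simp)
         (rule A, use h Y1e Y2e e in \<open>simp_all add: algebra_simps\<close>)
    thus ?thesis using three_neq by blast
  next
    assume h: "Z1 = 1" "Z2 = 1"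
    have "proportional (row 3 M) (row 1 M)"
      by (rule prop_rows[where s = p1 and t = "- r1"], use nz in simp)
         (rule A, use h Z1e Z2e e in \<open>simp_all add: algebra_simps\<close>)
    thus ?thesis using three_neq by blast
  next
    assume h: "Y1 = Z1" "Y2 = Z2"
    have "proportional (row 2 M) (row 3 M)"
      by (rule prop_rows[where s = r1 and t = "- q1"], use nz in simp)
         (rule A, use h YZ1 YZ2 e in \<open>simp_all add: algebra_simps\<close>)
    thus ?thesis using three_neq by blast
  next
    assume h: "Y1 = 1" "Z1 = 1"
    have "proportional (column 2 M) (column 1 M)"
      by (rule prop_cols[where s = p1 and t = "- p2"], use nz in simp)
         (rule A, use h Y1e Z1e e in \<open>simp_all add: algebra_simps\<close>)
    thus ?thesis using three_neq by blast
  next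
    assume h: "Y2 = 1" "Z2 = 1"
    have "proportional (column 3 M) (column 1 M)"
      by (rule prop_cols[where s = p1 and t = "- p3"], use nz in simp)
         (rule A, use h Y2e Z2e e in \<open>simp_all add: algebra_simps\<close>)
    thus ?thesis using three_neq by blast
  next
    assume h: "Y1 = Y2" "Z1 = Z2"
    have "proportional (column 2 M) (column 3 M)"
      by (rule prop_cols[where s = p3 and t = "- p2"], use nz in simp)
         (rule A, use h YY ZZ e in \<open>simp_all add: algebra_simps\<close>)
    thus ?thesis using three_neq by blast
  qed
qed


lemma key_lemma:
  fixes \<theta> :: "'a::field_char_0"
  assumes th: "\<theta> ^ N = 1" "N > 0"
    and r: "(\<theta>^A - 1) * (\<theta>^D - 1) = (\<theta>^B - 1) * (\<theta>^C - 1)"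
    and nA: "\<theta>^A \<noteq> 1" and nD: "\<theta>^D \<noteq> 1"
  shows "\<theta>^(A + D) = \<theta>^(B + C)"
proof -
  obtain \<xi> :: complex where tr: "\<And>g. evr \<theta> g = 0 \<longleftrightarrow> evr \<xi> g = 0"
    using minpoly_transfer[OF th] by blast
  have "evr \<theta> ((monom 1 A - 1) * (monom 1 D - 1) - (monom 1 B - 1) * (monom 1 C - 1)) = 0"
    using r by simp
  hence "evr \<xi> ((monom 1 A - 1) * (monom 1 D - 1) - (monom 1 B - 1) * (monom 1 C - 1)) = 0"
    using tr by blast
  hence rx: "(\<xi>^A - 1) * (\<xi>^D - 1) = (\<xi>^B - 1) * (\<xi>^C - 1)" by simp
  have "evr \<theta> (monom 1 N - 1) = 0" using th by simp
  hence "evr \<xi> (monom 1 N - 1) = 0" using tr by blast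
  hence xN: "\<xi> ^ N = 1" by simp
  have xA: "\<xi> ^ A \<noteq> 1"
  proof
    assume "\<xi> ^ A = 1"
    hence "evr \<xi> (monom 1 A - 1) = 0" by simp
    hence "evr \<theta> (monom 1 A - 1) = 0" using tr by blast
    thus False using nA by simp
  qed
  have xD: "\<xi> ^ D \<noteq> 1"
  proof
    assume "\<xi> ^ D = 1"
    hence "evr \<xi> (monom 1 D - 1) = 0" by simp
    hence "evr \<theta> (monom 1 D - 1) = 0" using tr by blast
    thus False using nD by simp
  qed
  have "\<xi> ^ (A + D) = \<xi> ^ (B + C)" by (rule cx_lemma[OF xN th(2) rx xA xD])
  hence "evr \<xi> (monom 1 (A + D) - monom 1 (B + C)) = 0" by simp
  hence "evr \<theta> (monom 1 (A + D) - monom 1 (B + C)) = 0" using tr by blast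
  thus ?thesis by simp
qed

lemma pw_inv:
  fixes \<theta> :: "'a::field"
  assumes "\<theta> ^ m = 1" "0 < m"
  shows "inverse (\<theta> ^ k) = \<theta> ^ ((m - 1) * k)"
proof -
  have "k + (m - 1) * k = m * k" using assms(2) by (cases m) auto
  hence "\<theta> ^ k * \<theta> ^ ((m - 1) * k) = (\<theta> ^ m) ^ k"
    by (simp add: power_add[symmetric] power_mult[symmetric] mult.commute)
  hence "\<theta> ^ k * \<theta> ^ ((m - 1) * k) = 1" using assms(1) by simp
  thus ?thesis by (rule inverse_unique)
qed

lemma pw_powi:
  fixes \<theta> :: "'a::field"
  assumes "\<theta> ^ m = 1" "0 < m"
  shows "\<exists>e. (\<theta> ^ i) powi a = \<theta> ^ e"
proof (cases "0 \<le> a")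
  case True
  hence "(\<theta> ^ i) powi a = \<theta> ^ (i * nat a)" by (simp add: power_int_def power_mult)
  thus ?thesis by blast
next
  case False
  hence "(\<theta> ^ i) powi a = inverse (\<theta> ^ i) ^ nat (- a)" by (simp add: power_int_def)
  also have "\<dots> = \<theta> ^ ((m - 1) * i * nat (- a))" using pw_inv[OF assms] by (simp add: power_mult)
  finally show ?thesis by blast
qed

lemma pw_Y:
  fixes \<theta> :: "'a::field"
  assumes "\<theta> ^ m = 1" "0 < m"
  shows "\<exists>E. \<theta> ^ a1 * \<theta> ^ a2 * inverse (\<theta> ^ a3) * inverse (\<theta> ^ a4) = \<theta> ^ E"
  by (rule exI[of _ "a1 + a2 + (m - 1) * a3 + (m - 1) * a4"]) (simp add: pw_inv[OF assms] power_add)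

lemma six_cases:
  fixes Y1 Y2 Z1 Z2 :: "'a::field"
  assumes rel: "(Y1 - 1) * (Z2 - 1) = (Y2 - 1) * (Z1 - 1)"
    and k: "Y1 \<noteq> 1 \<Longrightarrow> Z2 \<noteq> 1 \<Longrightarrow> Y1 * Z2 = Y2 * Z1" and nz: "Y1 \<noteq> 0"
  shows "(Y1 = 1 \<and> Y2 = 1) \<or> (Z1 = 1 \<and> Z2 = 1) \<or> (Y1 = Z1 \<and> Y2 = Z2) \<or>
           (Y1 = 1 \<and> Z1 = 1) \<or> (Y2 = 1 \<and> Z2 = 1) \<or> (Y1 = Y2 \<and> Z1 = Z2)"
proof (cases "Y1 = 1")
  case True
  hence "(Y2 - 1) * (Z1 - 1) = 0" using rel by simp
  thus ?thesis using True by auto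
next
  case F1: False
  show ?thesis
  proof (cases "Z2 = 1")
    case True
    hence "(Y2 - 1) * (Z1 - 1) = 0" using rel by simp
    thus ?thesis using True by auto
  next
    case False
    have p: "Y1 * Z2 = Y2 * Z1" using k F1 False by blast
    have s: "Y1 + Z2 = Y2 + Z1" using rel p by (simp add: algebra_simps)
    have "(Y1 - Y2) * (Y1 - Z1) = Y1 * Y1 - Y1 * (Y2 + Z1) + Y2 * Z1" by (simp add: algebra_simps)
    also have "\<dots> = Y1 * Y1 - Y1 * (Y1 + Z2) + Y1 * Z2" using p s by simp
    also have "\<dots> = 0" by (simp add: algebra_simps)
    finally have "Y1 = Y2 \<or> Y1 = Z1" by simp
    thus ?thesis
    proof
      assume h: "Y1 = Y2"
      hence "Y1 * Z2 = Y1 * Z1" using p by simp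
      hence "Z1 = Z2" using nz by simp
      thus ?thesis using h by simp
    next
      assume h: "Y1 = Z1"
      hence "Y2 = Z2" using s by simp
      thus ?thesis using h by simp
    qed
  qed
qed


theorem lemma5p17:
  fixes x y z :: "'a::field_char_0" and a b c :: int
  assumes "root_of_unity x" and "root_of_unity y" and "root_of_unity z"
    and "det (M3 a b c x y z) = 0"
  shows "(\<exists>i j. i \<noteq> j \<and> proportional (row i (M3 a b c x y z)) (row j (M3 a b c x y z)))
       \<or> (\<exists>i j. i \<noteq> j \<and> proportional (column i (M3 a b c x y z)) (column j (M3 a b c x y z)))"
proof -
  define M where "M = M3 a b c x y z"
  obtain nx where nx: "nx > 0" "x ^ nx = 1" using assms(1) unfolding root_of_unity_def by blast
  obtain ny where ny: "ny > 0" "y ^ ny = 1" using assms(2) unfolding root_of_unity_def by blast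
  obtain nz where nz: "nz > 0" "z ^ nz = 1" using assms(3) unfolding root_of_unity_def by blast
  define L where "L = nx * ny * nz"
  have L0: "L > 0" using nx ny nz unfolding L_def by simp
  have "x ^ L = ((x ^ nx) ^ ny) ^ nz" unfolding L_def by (simp add: power_mult)
  hence xL: "x ^ L = 1" using nx by simp
  have "L = ny * nx * nz" unfolding L_def by simp
  hence "y ^ L = ((y ^ ny) ^ nx) ^ nz" by (simp only: power_mult)
  hence yL: "y ^ L = 1" using ny by simp
  have "L = nz * nx * ny" unfolding L_def by simp
  hence "z ^ L = ((z ^ nz) ^ nx) ^ ny" by (simp only: power_mult)
  hence zL: "z ^ L = 1" using nz by simp
  obtain \<theta> :: 'a and m where th: "0 < m" "\<theta> ^ m = 1" and gen: "\<And>w. w ^ L = 1 \<Longrightarrow> \<exists>i. w = \<theta> ^ i"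
    using cyclic_roots[OF L0] by blast
  have t0: "\<theta> \<noteq> 0" using th by (intro notI) (simp add: zero_power)
  obtain ix where ix: "x = \<theta> ^ ix" using gen[OF xL] by blast
  obtain iy where iy: "y = \<theta> ^ iy" using gen[OF yL] by blast
  obtain iz where iz: "z = \<theta> ^ iz" using gen[OF zL] by blast
  have pw: "\<exists>E. (\<theta> ^ i) powi e = \<theta> ^ E" for i e using pw_powi[OF th(2) th(1)] by blast
  define p1 where "p1 = x powi a"
  define p2 where "p2 = x powi b"
  define p3 where "p3 = x powi c"
  define q1 where "q1 = y powi a"
  define q2 where "q2 = y powi b"
  define q3 where "q3 = y powi c"
  define r1 where "r1 = z powi a"
  define r2 where "r2 = z powi b"
  define r3 where "r3 = z powi c"
  obtain P1 where P1: "p1 = \<theta> ^ P1" using pw unfolding p1_def ix by blast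
  obtain P2 where P2: "p2 = \<theta> ^ P2" using pw unfolding p2_def ix by blast
  obtain P3 where P3: "p3 = \<theta> ^ P3" using pw unfolding p3_def ix by blast
  obtain Q1 where Q1: "q1 = \<theta> ^ Q1" using pw unfolding q1_def iy by blast
  obtain Q2 where Q2: "q2 = \<theta> ^ Q2" using pw unfolding q2_def iy by blast
  obtain Q3 where Q3: "q3 = \<theta> ^ Q3" using pw unfolding q3_def iy by blast
  obtain R1 where R1: "r1 = \<theta> ^ R1" using pw unfolding r1_def iz by blast
  obtain R2 where R2: "r2 = \<theta> ^ R2" using pw unfolding r2_def iz by blast
  obtain R3 where R3: "r3 = \<theta> ^ R3" using pw unfolding r3_def iz by blast
  have nzs: "p1 \<noteq> 0" "p2 \<noteq> 0" "p3 \<noteq> 0" "q1 \<noteq> 0" "q2 \<noteq> 0" "q3 \<noteq> 0" "r1 \<noteq> 0" "r2 \<noteq> 0" "r3 \<noteq> 0"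
    using t0 P1 P2 P3 Q1 Q2 Q3 R1 R2 R3 by simp_all
  have e: "M$1$1 = p1" "M$1$2 = p2" "M$1$3 = p3" "M$2$1 = q1" "M$2$2 = q2" "M$2$3 = q3"
     "M$3$1 = r1" "M$3$2 = r2" "M$3$3 = r3"
    unfolding M_def M3_def p1_def p2_def p3_def q1_def q2_def q3_def r1_def r2_def r3_def
    by simp_all
  define Y1 where "Y1 = q2 * p1 * inverse q1 * inverse p2"
  define Y2 where "Y2 = q3 * p1 * inverse q1 * inverse p3"
  define Z1 where "Z1 = r2 * p1 * inverse r1 * inverse p2"
  define Z2 where "Z2 = r3 * p1 * inverse r1 * inverse p3"
  obtain A1 where A1: "Y1 = \<theta> ^ A1" using pw_Y[OF th(2) th(1)] unfolding Y1_def Q2 P1 Q1 P2 by blast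
  obtain A2 where A2: "Y2 = \<theta> ^ A2" using pw_Y[OF th(2) th(1)] unfolding Y2_def Q3 P1 Q1 P3 by blast
  obtain A3 where A3: "Z1 = \<theta> ^ A3" using pw_Y[OF th(2) th(1)] unfolding Z1_def R2 P1 R1 P2 by blast
  obtain A4 where A4: "Z2 = \<theta> ^ A4" using pw_Y[OF th(2) th(1)] unfolding Z2_def R3 P1 R1 P3 by blast
  have "det M = (q1 * r1 * p2 * p3 / p1) * ((Y1 - 1) * (Z2 - 1) - (Y2 - 1) * (Z1 - 1))"
    unfolding det_3 e Y1_def Y2_def Z1_def Z2_def using nzs by (simp add: field_simps)
  moreover have "det M = 0" using assms(4) unfolding M_def .
  moreover have "q1 * r1 * p2 * p3 / p1 \<noteq> 0" using nzs by simp
  ultimately have rel: "(Y1 - 1) * (Z2 - 1) = (Y2 - 1) * (Z1 - 1)" by simp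
  have k: "Y1 * Z2 = Y2 * Z1" if "Y1 \<noteq> 1" "Z2 \<noteq> 1"
  proof -
    have "\<theta> ^ (A1 + A4) = \<theta> ^ (A2 + A3)"
      by (rule key_lemma[OF th(2) th(1)]) (use rel that A1 A2 A3 A4 in simp_all)
    thus ?thesis using A1 A2 A3 A4 by (simp add: power_add)
  qed
  have "Y1 \<noteq> 0" using A1 t0 by simp
  have cs: "(Y1 = 1 \<and> Y2 = 1) \<or> (Z1 = 1 \<and> Z2 = 1) \<or> (Y1 = Z1 \<and> Y2 = Z2) \<or>
           (Y1 = 1 \<and> Z1 = 1) \<or> (Y2 = 1 \<and> Z2 = 1) \<or> (Y1 = Y2 \<and> Z1 = Z2)"
    by (rule six_cases[OF rel k \<open>Y1 \<noteq> 0\<close>])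
  show ?thesis
    using concl_lemma[OF e nzs Y1_def Y2_def Z1_def Z2_def cs] unfolding M_def .
qed

end
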